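(* Consider a single flow on a route of $n$ links $\mathcal{T}_0,\dots,\mathcal{T}_{n-1}$ under the $\phi$-hop interference model, $0\le\phi\le n-1$, with slice widths $w_0=w_1=\dots=w_{n-1}$ all equal. Then the Ordered Round-Robin policy $ORR$ is both throughput-optimal and deadline-optimal.
   Context: Time is slotted. Under $\phi$-hop interference on the line, distinct links $\mathcal{T}_j,\mathcal{T}_{j'}$ cannot be active in the same slot if $|j-j'|\le\phi$. Each link $\mathcal{T}_j$ has a slice of width $w_j$ for the flow with a FCFS queue; the flow has deterministic fluid arrival rate $\lambda>0$ per slot. Units arriving in slot $t$ are available at the first link from slot $t+1$; an activated link serves $\min\{Q,w_j\}$ from its queue of size $Q$; units served at a link in slot $t$ are available at the next link from slot $t+1$; a packet's delay is the slot in which it is served at the last link minus its arrival slot. Policies are admissible (respect interference, work-conserving) and cyclic with period $K^\pi$; $\bar{\mu}^\pi_e=\frac1{K^\pi}\sum_{t=0}^{K^\pi-1}\mu^\pi_e(t)$ is the activation rate of link $e$. Throughput: $\lambda^*(\pi,\boldsymbol{w})=\min_e\bar{\mu}^\pi_e w_e$; $\pi$ is throughput-optimal for $\boldsymbol{w}$ if $\lambda^*(\pi,\boldsymbol{w})\ge\lambda^*(\pi',\boldsymbol{w})$ for all cyclic admissible $\pi'$. Deadlines: $\tau^*(\pi,\boldsymbol{w},\lambda)$ is the maximum packet delay under $\pi$, $\tau^*(\pi)=\lim_{\lambda\to0}\tau^*(\pi,\boldsymbol{w},\lambda)$, and $\pi$ is deadline-optimal if $\tau^*(\pi)\le\tau^*(\pi')$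 for all cyclic admissible $\pi'$. The $ORR$ policy has period $\phi+1$ and in slot $t$ activates every link $\mathcal{T}_j$ with $j\equiv t\pmod{\phi+1}$. *)

theory Defs
  imports Complex_Main "HOL-Library.Extended_Real"
begin

text \<open>Links are indexed 0..n-1.  A schedule mu maps a slot t and a link j to
  True iff link j is activated in slot t.  A cyclic policy is a pair (K, mu)
  with period K > 0 and mu (t + K) = mu t.\<close>

type_synonym schedule = "nat \<Rightarrow> nat \<Rightarrow> bool"

definition cyclic_admissible :: "nat \<Rightarrow> nat \<Rightarrow> nat \<Rightarrow> schedule \<Rightarrow> bool" where
  "cyclic_admissible n phi K mu \<longleftrightarrow>
     0 < K \<and> (\<forall>t. mu (t + K) = mu t) \<and>
     (\<forall>t j j'. j < n \<and> j' < n \<and> j \<noteq> j' \<and> mu t j \<and> mu t j'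
        \<longrightarrow> phi < nat \<bar>int j - int j'\<bar>)"

definition act_rate :: "nat \<Rightarrow> schedule \<Rightarrow> nat \<Rightarrow> real" where
  "act_rate K mu e = (\<Sum>t<K. if mu t e then 1 else 0) / real K"

definition throughput :: "nat \<Rightarrow> (nat \<Rightarrow> real) \<Rightarrow> nat \<Rightarrow> schedule \<Rightarrow> real" where
  "throughput n w K mu = Min ((\<lambda>e. act_rate K mu e * w e) ` {..<n})"

definition throughput_optimal ::
  "nat \<Rightarrow> nat \<Rightarrow> (nat \<Rightarrow> real) \<Rightarrow> nat \<Rightarrow> schedule \<Rightarrow> bool" where
  "throughput_optimal n phi w K mu \<longleftrightarrow> cyclic_admissible n phi K mu \<and>
     (\<forall>K' mu'. cyclic_admissible n phi K' mu' \<longrightarrow>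
        throughput n w K' mu' \<le> throughput n w K mu)"

definition srv :: "schedule \<Rightarrow> (nat \<Rightarrow> real) \<Rightarrow> (nat \<Rightarrow> real) \<Rightarrow> nat \<Rightarrow> nat \<Rightarrow> real" where
  "srv mu w Q t j = (if mu t j then min (Q j) (w j) else 0)"

text \<open>queues mu w lam t j: queue size at link j at the beginning of slot t.
  Arrivals of slot t reach link 0 at slot t+1; service at link j-1 in slot t
  reaches link j at slot t+1.\<close>
fun queues :: "schedule \<Rightarrow> (nat \<Rightarrow> real) \<Rightarrow> real \<Rightarrow> nat \<Rightarrow> nat \<Rightarrow> real" where
  "queues mu w lam 0 = (\<lambda>j. 0)"
| "queues mu w lam (Suc t) = (\<lambda>j.
     queues mu w lam t j - srv mu w (queues mu w lam t) t j
     + (if j = 0 then lam else srv mu w (queues mu w lam t) t (j - 1)))"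

definition departed :: "nat \<Rightarrow> schedule \<Rightarrow> (nat \<Rightarrow> real) \<Rightarrow> real \<Rightarrow> nat \<Rightarrow> real" where
  "departed n mu w lam t = (\<Sum>s\<le>t. srv mu w (queues mu w lam s) s (n - 1))"

text \<open>Maximum delay of the fluid that arrived in slot t (FCFS): the last of it is
  the (lam*(t+1))-th unit, served at the last link in the first slot t' with
  departed t' \<ge> lam*(t+1); its delay is t' - t.\<close>
definition slot_delay :: "nat \<Rightarrow> schedule \<Rightarrow> (nat \<Rightarrow> real) \<Rightarrow> real \<Rightarrow> nat \<Rightarrow> ereal" where
  "slot_delay n mu w lam t =
     (if \<exists>t'. lam * real (t + 1) \<le> departed n mu w lam t'
      then ereal (real ((LEAST t'. lam * real (t + 1) \<le> departed n mu w lam t') - t))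
      else \<infinity>)"

definition max_delay :: "nat \<Rightarrow> schedule \<Rightarrow> (nat \<Rightarrow> real) \<Rightarrow> real \<Rightarrow> ereal" where
  "max_delay n mu w lam = (SUP t. slot_delay n mu w lam t)"

definition deadline :: "nat \<Rightarrow> schedule \<Rightarrow> (nat \<Rightarrow> real) \<Rightarrow> ereal" where
  "deadline n mu w = Lim (at_right 0) (\<lambda>lam. max_delay n mu w lam)"

definition deadline_optimal ::
  "nat \<Rightarrow> nat \<Rightarrow> (nat \<Rightarrow> real) \<Rightarrow> nat \<Rightarrow> schedule \<Rightarrow> bool" where
  "deadline_optimal n phi w K mu \<longleftrightarrow> cyclic_admissible n phi K mu \<and>
     (\<forall>K' mu'. cyclic_admissible n phi K' mu' \<longrightarrow>
        deadline n mu w \<le> deadline n mu' w)"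

definition ORR :: "nat \<Rightarrow> schedule" where
  "ORR phi t j \<longleftrightarrow> j mod (phi + 1) = t mod (phi + 1)"

end

theory Submission
  imports Defs
begin


fun q0 :: "schedule \<Rightarrow> nat \<Rightarrow> nat \<Rightarrow> real" where
  "q0 mu 0 j = 0"
| "q0 mu (Suc s) j = (if mu s j then 0 else q0 mu s j)
     + (if j = 0 then 1 else if mu s (j - 1) then q0 mu s (j - 1) else 0)"

definition sv :: "schedule \<Rightarrow> nat \<Rightarrow> nat \<Rightarrow> real" where
  "sv mu s j = (if mu s j then q0 mu s j else 0)"

definition inp :: "schedule \<Rightarrow> nat \<Rightarrow> nat \<Rightarrow> real" where
  "inp mu s j = (if j = 0 then 1 else sv mu s (j - 1))"

definition AA :: "schedule \<Rightarrow> nat \<Rightarrow> nat \<Rightarrow> real" where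
  "AA mu j s = (\<Sum>r<s. inp mu r j)"

definition DD :: "schedule \<Rightarrow> nat \<Rightarrow> nat \<Rightarrow> real" where
  "DD mu j s = (\<Sum>r<s. sv mu r j)"

lemma q0_Suc: "q0 mu (Suc s) j = q0 mu s j - sv mu s j + inp mu s j"
  by (simp add: sv_def inp_def)

lemma q0_nonneg: "0 \<le> q0 mu s j"
  by (induction s arbitrary: j) auto

lemma sv_nonneg: "0 \<le> sv mu s j"
  by (simp add: sv_def q0_nonneg)

lemma sv_le: "sv mu s j \<le> q0 mu s j"
  by (simp add: sv_def q0_nonneg)

lemma inp_nonneg: "0 \<le> inp mu s j"
  by (simp add: inp_def sv_nonneg)

lemma q0_AD: "q0 mu s j = AA mu j s - DD mu j s"
proof (induction s)
  case 0 then show ?case by (simp add: AA_def DD_def)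
next
  case (Suc s)
  show ?case unfolding q0_Suc Suc AA_def DD_def by simp
qed

lemma DD_Suc_le: "DD mu j (Suc s) \<le> AA mu j s"
  using sv_le[of mu s j] q0_AD[of mu s j] by (simp add: DD_def)

lemma AA_0: "AA mu 0 s = real s"
  by (simp add: AA_def inp_def)

lemma AA_Suc: "AA mu (Suc j) s = DD mu j s"
  by (simp add: AA_def DD_def inp_def)

lemma AA_le: "AA mu j s \<le> real (s - j)"
proof (induction j arbitrary: s)
  case 0 then show ?case by (simp add: AA_0)
next
  case (Suc j)
  show ?case
  proof (cases s)
    case 0 then show ?thesis by (simp add: AA_Suc DD_def)
  next
    case (Suc s')
    have "DD mu j (Suc s') \<le> AA mu j s'" by (rule DD_Suc_le)
    also have "\<dots> \<le> real (s' - j)" by (rule Suc.IH)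
    finally show ?thesis using Suc by (simp add: AA_Suc)
  qed
qed

lemma DD_shift: "DD mu (j + k) (s + k) \<le> DD mu j s"
proof (induction k)
  case 0 then show ?case by simp
next
  case (Suc k)
  have "DD mu (Suc (j + k)) (Suc (s + k)) \<le> AA mu (Suc (j + k)) (s + k)" by (rule DD_Suc_le)
  also have "\<dots> = DD mu (j + k) (s + k)" by (rule AA_Suc)
  finally show ?case using Suc by simp
qed

lemma DD_mono: "s \<le> s' \<Longrightarrow> DD mu j s \<le> DD mu j s'"
  unfolding DD_def by (rule sum_mono2) (auto simp: sv_nonneg)

lemma AA_mono: "s \<le> s' \<Longrightarrow> AA mu j s \<le> AA mu j s'"
  unfolding AA_def by (rule sum_mono2) (auto simp: inp_nonneg)

lemma DD_gap0:
  assumes "\<forall>r. s < r \<and> r \<le> s + d \<longrightarrow> \<not> mu r j"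
  shows "DD mu j (Suc s + d) = DD mu j (Suc s)"
  using assms
proof (induction d)
  case 0 then show ?case by simp
next
  case (Suc d)
  then have "\<not> mu (Suc s + d) j" by auto
  then show ?case using Suc by (simp add: DD_def sv_def)
qed

lemma DD_gap:
  assumes "\<forall>r. s < r \<and> r < s' \<longrightarrow> \<not> mu r j" "s < s'"
  shows "DD mu j s' = DD mu j (Suc s)"
proof -
  have "s' = Suc s + (s' - Suc s)" using assms(2) by simp
  moreover have "DD mu j (Suc s + (s' - Suc s)) = DD mu j (Suc s)"
    by (rule DD_gap0) (use assms in auto)
  ultimately show ?thesis by simp
qed

lemma DD_active: "mu s j \<Longrightarrow> DD mu j (Suc s) = AA mu j s"
  using q0_AD[of mu s j] by (simp add: DD_def sv_def)



lemma periodic_mult: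
  fixes mu :: schedule and K t m :: nat
  assumes "\<forall>t. mu (t + K) = mu t"
  shows "mu (t + K * m) = mu t"
proof (induction m)
  case 0 then show ?case by simp
next
  case (Suc m)
  have "mu (t + K * Suc m) = mu ((t + K * m) + K)" by (simp add: algebra_simps)
  also have "\<dots> = mu (t + K * m)" using assms by simp
  finally show ?case using Suc by simp
qed

lemma periodic_mod:
  fixes mu :: schedule and K t :: nat
  assumes "\<forall>t. mu (t + K) = mu t"
  shows "mu t = mu (t mod K)"
proof -
  have "t = t mod K + K * (t div K)" by simp
  then show ?thesis using periodic_mult[OF assms, of "t mod K" "t div K"] by metis
qed

lemma window:
  fixes mu :: schedule and K r b :: nat
  assumes "\<forall>t. mu (t + K) = mu t" "0 < K" "mu r j"
  shows "\<exists>s. b \<le> s \<and> s < b + K \<and> mu s j"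
proof -
  define r' where "r' = r mod K"
  have r': "r' < K" "mu r' j" using assms periodic_mod[OF assms(1), of r] by (auto simp: r'_def)
  define c where "c = b div K"
  define m where "m = b mod K"
  have b: "b = K * c + m" "m < K" using assms(2) by (auto simp: c_def m_def)
  show ?thesis
  proof (cases "m \<le> r'")
    case True
    have "mu (r' + K * c) j" using r' periodic_mult[OF assms(1)] by simp
    then show ?thesis using True b r' by (intro exI[of _ "r' + K * c"]) auto
  next
    case False
    have "mu (r' + K * (c + 1)) j" using r' periodic_mult[OF assms(1)] by metis
    then show ?thesis using False b r' by (intro exI[of _ "r' + K * (c + 1)"]) auto
  qed
qed

lemma q0_growth:
  assumes "\<forall>s. inp mu s j \<le> c"
  shows "q0 mu (s + d) j \<le> q0 mu s j + real d * c"
proof (induction d)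
  case 0 then show ?case by simp
next
  case (Suc d)
  have "q0 mu (Suc (s + d)) j = q0 mu (s + d) j - sv mu (s + d) j + inp mu (s + d) j"
    by (rule q0_Suc)
  also have "\<dots> \<le> q0 mu (s + d) j + c" using sv_nonneg[of mu "s + d" j] spec[OF assms, of "s + d"] by linarith
  finally show ?case using Suc by (simp add: algebra_simps)
qed

lemma q0_bound_link:
  assumes "\<forall>b. \<exists>s. b \<le> s \<and> s < b + K \<and> mu s j" "\<forall>s. inp mu s j \<le> c" "0 \<le> c"
  shows "q0 mu t j \<le> real K * c"
proof (cases "t < K")
  case True
  have "q0 mu (0 + t) j \<le> q0 mu 0 j + real t * c" by (rule q0_growth[OF assms(2)])
  also have "\<dots> \<le> real K * c" using True assms(3) by (simp add: mult_right_mono)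
  finally show ?thesis by simp
next
  case False
  obtain s where s: "t - K \<le> s" "s < t - K + K" "mu s j" using assms(1) by blast
  have "q0 mu (Suc s + (t - Suc s)) j \<le> q0 mu (Suc s) j + real (t - Suc s) * c"
    by (rule q0_growth[OF assms(2)])
  moreover have "q0 mu (Suc s) j \<le> c"
    using q0_Suc[of mu s j] s(3) assms(2) by (simp add: sv_def)
  moreover have "Suc s + (t - Suc s) = t" using s False by simp
  moreover have "real (t - Suc s) * c \<le> real (K - 1) * c"
    using s False assms(3) by (intro mult_right_mono) auto
  moreover have "0 < K" using assms(1) by force
  moreover have "c + real (K - 1) * c = real K * c"
    using \<open>0 < K\<close> by (cases K) (auto simp: algebra_simps)
  ultimately show ?thesis by (metis (no_types, lifting) add_mono order_trans)
qed

lemma q0_bound: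
  assumes "\<forall>j<n. \<forall>b. \<exists>s. b \<le> s \<and> s < b + K \<and> mu s j"
  shows "j < n \<Longrightarrow> q0 mu t j \<le> real K ^ Suc j"
proof (induction j arbitrary: t)
  case 0
  show ?case using q0_bound_link[of K mu 0 1 t] assms 0 by (simp add: inp_def)
next
  case (Suc j)
  have "\<forall>s. inp mu s (Suc j) \<le> real K ^ Suc j"
    using Suc sv_le by (simp add: inp_def) (meson Suc_lessD order_trans)
  then show ?case using q0_bound_link[of K mu "Suc j" "real K ^ Suc j" t] assms Suc by simp
qed



definition dep0 :: "nat \<Rightarrow> schedule \<Rightarrow> nat \<Rightarrow> real" where
  "dep0 n mu t = DD mu (n - 1) (Suc t)"

definition sd0 :: "nat \<Rightarrow> schedule \<Rightarrow> nat \<Rightarrow> ereal" where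
  "sd0 n mu t = (if \<exists>t'. real (t + 1) \<le> dep0 n mu t'
      then ereal (real ((LEAST t'. real (t + 1) \<le> dep0 n mu t') - t)) else \<infinity>)"

definition M0 :: "nat \<Rightarrow> schedule \<Rightarrow> ereal" where
  "M0 n mu = (SUP t. sd0 n mu t)"

locale lin =
  fixes n :: nat and mu :: schedule and w :: "nat \<Rightarrow> real" and lam B :: real
  assumes w: "\<forall>j<n. w j = w 0"
    and qB: "\<forall>s j. j < n \<longrightarrow> q0 mu s j \<le> B"
    and lam: "0 < lam" "lam * B \<le> w 0"
begin

lemma srv_eq:
  assumes "queues mu w lam s j = lam * q0 mu s j" "j < n"
  shows "srv mu w (queues mu w lam s) s j = lam * sv mu s j"
proof -
  have "q0 mu s j \<le> B" using qB assms(2) by blast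
  then have "lam * q0 mu s j \<le> lam * B" using lam by (simp add: mult_left_mono)
  moreover have "w j = w 0" using w assms(2) by blast
  ultimately have "lam * q0 mu s j \<le> w j" using lam by linarith
  then show ?thesis using assms(1) by (simp add: srv_def sv_def min_def)
qed

lemma queues_eq: "j < n \<Longrightarrow> queues mu w lam s j = lam * q0 mu s j"
proof (induction s arbitrary: j)
  case 0 then show ?case by simp
next
  case (Suc s)
  have e1: "srv mu w (queues mu w lam s) s j = lam * sv mu s j"
    using Suc by (intro srv_eq) auto
  show ?case
  proof (cases "j = 0")
    case True
    then show ?thesis using Suc e1 by (simp add: q0_Suc inp_def algebra_simps del: q0.simps)
  next
    case False
    have e2: "srv mu w (queues mu w lam s) s (j - 1) = lam * sv mu s (j - 1)"
      using Suc by (intro srv_eq) auto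
    show ?thesis using False Suc e1 e2 by (simp add: q0_Suc inp_def algebra_simps del: q0.simps)
  qed
qed

lemma departed_eq:
  assumes "0 < n"
  shows "departed n mu w lam t = lam * dep0 n mu t"
proof -
  have "departed n mu w lam t = (\<Sum>s\<le>t. lam * sv mu s (n - 1))"
    unfolding departed_def using assms by (intro sum.cong refl srv_eq queues_eq) auto
  also have "\<dots> = lam * dep0 n mu t"
    by (simp add: dep0_def DD_def sum_distrib_left lessThan_Suc_atMost)
  finally show ?thesis .
qed

lemma slot_delay_eq:
  assumes "0 < n"
  shows "slot_delay n mu w lam t = sd0 n mu t"
proof -
  have eq: "\<And>t'. (lam * real (t + 1) \<le> departed n mu w lam t') = (real (t + 1) \<le> dep0 n mu t')"
    using departed_eq[OF assms] lam by simp
  then show ?thesis unfolding slot_delay_def sd0_def by (simp only: eq)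
qed

lemma max_delay_eq:
  assumes "0 < n"
  shows "max_delay n mu w lam = M0 n mu"
  unfolding max_delay_def M0_def using slot_delay_eq[OF assms] by simp

end

lemma deadline_eq:
  assumes "\<forall>j<n. w j = w 0" "0 < w 0" "\<forall>s j. j < n \<longrightarrow> q0 mu s j \<le> B" "0 < B" "0 < n"
  shows "deadline n mu w = M0 n mu"
proof -
  have ev: "eventually (\<lambda>lam. max_delay n mu w lam = M0 n mu) (at_right (0::real))"
    unfolding eventually_at_right_field
  proof (intro exI[of _ "w 0 / B"] conjI allI impI)
    show "0 < w 0 / B" using assms(2,4) by simp
  next
    fix lam :: real assume "0 < lam" "lam < w 0 / B"
    then have "0 < lam" "lam * B \<le> w 0" using assms(4) by (auto simp: field_simps)
    then interpret lin n mu w lam B using assms(1,3) by unfold_locales blast+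
    show "max_delay n mu w lam = M0 n mu" using max_delay_eq assms(5) by blast
  qed
  have "((\<lambda>lam. max_delay n mu w lam) \<longlongrightarrow> M0 n mu) (at_right (0::real))"
    by (rule tendsto_eventually[OF ev])
  then show ?thesis unfolding deadline_def
    by (intro tendsto_Lim) (simp_all add: trivial_limit_at_right_real)
qed



lemma adm_per: "cyclic_admissible n phi K mu \<Longrightarrow> \<forall>t. mu (t + K) = mu t"
  by (simp add: cyclic_admissible_def)

lemma adm_conflict:
  assumes "cyclic_admissible n phi K mu" "j \<le> phi" "j' \<le> phi" "phi \<le> n - 1" "1 \<le> n"
    "mu t j" "mu t j'"
  shows "j = j'"
proof (rule ccontr)
  assume "j \<noteq> j'"
  moreover have "j < n" "j' < n" using assms(2-5) by linarith+
  moreover have "\<forall>t j j'. j < n \<and> j' < n \<and> j \<noteq> j' \<and> mu t j \<and> mu t j'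
        \<longrightarrow> phi < nat \<bar>int j - int j'\<bar>" using assms(1) unfolding cyclic_admissible_def by blast
  ultimately have "phi < nat \<bar>int j - int j'\<bar>" using assms(6,7) by blast
  then show False using assms(2,3) by linarith
qed

lemma gap:
  fixes mu :: schedule
  assumes adm: "cyclic_admissible n phi K mu" and np: "phi \<le> n - 1" "1 \<le> n"
    and act: "\<forall>j<n. \<exists>r. mu r j"
  shows "\<exists>j\<le>phi. \<exists>u. j \<le> u \<and> mu u j \<and> (\<forall>r. u < r \<and> r \<le> u + phi \<longrightarrow> \<not> mu r j)"
proof -
  have per: "\<forall>t. mu (t + K) = mu t" using adm_per[OF adm] .
  have K: "0 < K" using adm by (simp add: cyclic_admissible_def)
  have ex: "\<exists>j\<le>phi. \<exists>u. mu u j \<and> (\<forall>r. u < r \<and> r \<le> u + phi \<longrightarrow> \<not> mu r j)"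
  proof (rule ccontr)
    assume H: "\<not> ?thesis"
    have H': "\<And>j u. j \<le> phi \<Longrightarrow> mu u j \<Longrightarrow> \<exists>r. u < r \<and> r \<le> u + phi \<and> mu r j"
      using H by blast
    have phi0: "0 < phi"
    proof (rule ccontr)
      assume "\<not> 0 < phi"
      then have "phi = 0" by simp
      obtain r where "mu r 0" using act np by auto
      then show False using H'[of 0 r] \<open>phi = 0\<close> by auto
    qed
    have "\<forall>j\<le>phi. \<exists>r. K \<le> r \<and> r < K + phi \<and> mu r j"
    proof (intro allI impI)
      fix j assume j: "j \<le> phi"
      obtain r0 where "mu r0 j" using act j np by fastforce
      define r1 where "r1 = r0 mod K"
      have r1: "r1 < K" "mu r1 j" using K periodic_mod[OF per, of r0] \<open>mu r0 j\<close>
        by (auto simp: r1_def)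
      have C: "\<exists>r. r \<le> r1 + d \<and> r1 + d < r + phi \<and> mu r j" for d
      proof (induction d)
        case 0 then show ?case using r1 phi0 by auto
      next
        case (Suc d)
        then obtain r where r: "r \<le> r1 + d" "r1 + d < r + phi" "mu r j" by blast
        show ?case
        proof (cases "r1 + Suc d < r + phi")
          case True then show ?thesis using r by (intro exI[of _ r]) auto
        next
          case False
          obtain r' where "r < r'" "r' \<le> r + phi" "mu r' j" using H'[OF j r(3)] by blast
          then show ?thesis using False r by (intro exI[of _ r']) auto
        qed
      qed
      obtain r where "r \<le> r1 + (K + phi - 1 - r1)" "r1 + (K + phi - 1 - r1) < r + phi" "mu r j"
        using C by blast
      then show "\<exists>r. K \<le> r \<and> r < K + phi \<and> mu r j" using r1 phi0
        by (intro exI[of _ r]) auto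
    qed
    then have "\<forall>j. \<exists>r. j \<le> phi \<longrightarrow> K \<le> r \<and> r < K + phi \<and> mu r j" by blast
    then obtain f where f: "\<forall>j. j \<le> phi \<longrightarrow> K \<le> f j \<and> f j < K + phi \<and> mu (f j) j"
      by (rule choice[THEN exE])
    have "inj_on f {..phi}"
    proof (rule inj_onI)
      fix j j' assume "j \<in> {..phi}" "j' \<in> {..phi}" "f j = f j'"
      then show "j = j'" using f adm_conflict[OF adm, of j j' "f j"] np by auto
    qed
    moreover have "f ` {..phi} \<subseteq> {K..<K + phi}" using f by auto
    ultimately have "card {..phi} \<le> card {K..<K + phi}" by (intro card_inj_on_le) auto
    then show False by simp
  qed
  then obtain j u where ju: "j \<le> phi" "mu u j" "\<forall>r. u < r \<and> r \<le> u + phi \<longrightarrow> \<not> mu r j"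
    by blast
  define u' where "u' = u + K * j"
  have "j \<le> K * j" using K by simp
  then have "j \<le> u'" unfolding u'_def by linarith
  moreover have "mu u' j" using ju periodic_mult[OF per, of u j] by (simp add: u'_def)
  moreover have "\<forall>r. u' < r \<and> r \<le> u' + phi \<longrightarrow> \<not> mu r j"
  proof (intro allI impI)
    fix r assume r: "u' < r \<and> r \<le> u' + phi"
    have "r = (r - K * j) + K * j" using r by (simp add: u'_def)
    then have "mu r = mu (r - K * j)" using periodic_mult[OF per, of "r - K * j" j] by metis
    moreover have "u < r - K * j \<and> r - K * j \<le> u + phi" using r by (auto simp: u'_def)
    ultimately show "\<not> mu r j" using ju by auto
  qed
  ultimately show ?thesis using ju(1) by blast
qed

lemma M0_lower:
  fixes mu :: schedule
  assumes adm: "cyclic_admissible n phi K mu" and np: "phi \<le> n - 1" "1 \<le> n"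
    and act: "\<forall>j<n. \<exists>r. mu r j"
  shows "ereal (real (n + phi)) \<le> M0 n mu"
proof -
  obtain j u where ju: "j \<le> phi" "j \<le> u" "mu u j" "\<forall>r. u < r \<and> r \<le> u + phi \<longrightarrow> \<not> mu r j"
    using gap[OF assms] by blast
  define t where "t = u - j"
  have "DD mu j (u + phi + 1) = DD mu j (Suc u)"
    by (rule DD_gap) (use ju in auto)
  also have "\<dots> \<le> AA mu j u" by (rule DD_Suc_le)
  also have "\<dots> \<le> real t" unfolding t_def by (rule AA_le)
  finally have a: "DD mu j (u + phi + 1) \<le> real t" .
  have b: "DD mu (j + (n - 1 - j)) (u + phi + 1 + (n - 1 - j)) \<le> DD mu j (u + phi + 1)"
    by (rule DD_shift)
  have c: "j + (n - 1 - j) = n - 1" "u + phi + 1 + (n - 1 - j) = t + n + phi"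
    using ju np by (auto simp: t_def)
  have "DD mu (n - 1) (t + n + phi) = DD mu (j + (n - 1 - j)) (u + phi + 1 + (n - 1 - j))"
    by (simp only: c)
  then have key: "DD mu (n - 1) (t + n + phi) \<le> real t" using a b by linarith
  have "ereal (real (n + phi)) \<le> sd0 n mu t"
  proof (cases "\<exists>t'. real (t + 1) \<le> dep0 n mu t'")
    case True
    define L where "L = (LEAST t'. real (t + 1) \<le> dep0 n mu t')"
    have L: "real (t + 1) \<le> dep0 n mu L" unfolding L_def using True by (rule LeastI_ex)
    have "t + n + phi \<le> L"
    proof (rule ccontr)
      assume "\<not> t + n + phi \<le> L"
      then have "DD mu (n - 1) (Suc L) \<le> DD mu (n - 1) (t + n + phi)" by (intro DD_mono) auto
      then show False using L key by (simp add: dep0_def)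
    qed
    moreover have "sd0 n mu t = ereal (real (L - t))"
      unfolding sd0_def L_def by (simp only: if_P[OF True])
    ultimately show ?thesis by simp
  next
    case False then show ?thesis by (simp add: sd0_def)
  qed
  also have "\<dots> \<le> M0 n mu" unfolding M0_def by (rule SUP_upper) simp
  finally show ?thesis .
qed

lemma ORR_adm:
  assumes "phi \<le> n - 1"
  shows "cyclic_admissible n phi (phi + 1) (ORR phi)"
  unfolding cyclic_admissible_def
proof (intro conjI allI impI)
  show "0 < phi + 1" by simp
  fix t show "ORR phi (t + (phi + 1)) = ORR phi t"
    by (auto simp only: ORR_def fun_eq_iff mod_add_self2)
next
  fix t j j' assume h: "j < n \<and> j' < n \<and> j \<noteq> j' \<and> ORR phi t j \<and> ORR phi t j'"
  then have m: "j mod (phi + 1) = j' mod (phi + 1)" by (simp add: ORR_def)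
  show "phi < nat \<bar>int j - int j'\<bar>"
  proof (rule ccontr)
    assume "\<not> phi < nat \<bar>int j - int j'\<bar>"
    then have d: "nat \<bar>int j - int j'\<bar> < phi + 1" by simp
    show False
    proof (cases "j < j'")
      case True
      then have "j' - j < phi + 1" "0 < j' - j" using d by auto
      moreover have "(j' - j) mod (phi + 1) = 0" using m True
        by (metis mod_eq_dvd_iff_nat less_imp_le_nat dvd_imp_mod_0)
      ultimately show False by simp
    next
      case False
      then have "j - j' < phi + 1" "0 < j - j'" using d h by auto
      moreover have "(j - j') mod (phi + 1) = 0" using m False
        by (metis mod_eq_dvd_iff_nat not_less dvd_imp_mod_0)
      ultimately show False by simp
    qed
  qed
qed

lemma M0_ORR:
  assumes "1 \<le> n"
  shows "M0 n (ORR phi) \<le> ereal (real (n + phi))"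
  unfolding M0_def
proof (rule SUP_least)
  fix t assume "t \<in> (UNIV :: nat set)"
  let ?mu = "ORR phi"
  define p where "p = phi + 1"
  define a where "a = (t div p + 1) * p"
  have a: "t + 1 \<le> a" "a \<le> t + p" "a mod p = 0"
  proof -
    have e: "t div p * p + t mod p = t" by (rule div_mult_mod_eq)
    have m: "t mod p < p" by (simp add: p_def)
    have "a = t div p * p + p" by (simp add: a_def algebra_simps)
    then show "t + 1 \<le> a" "a \<le> t + p" using e m by linarith+
    show "a mod p = 0" by (simp add: a_def)
  qed
  have chain: "i < n \<Longrightarrow> real (t + 1) \<le> DD ?mu i (a + i + 1)" for i
  proof (induction i)
    case 0
    have "?mu a 0" using a by (simp add: ORR_def p_def)
    then have "DD ?mu 0 (Suc a) = real a" using DD_active AA_0 by metis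
    then show ?case using a by simp
  next
    case (Suc i)
    have "(a + Suc i) mod p = Suc i mod p" using a(3) mod_add_left_eq[of a p "Suc i"] by simp
    then have "?mu (a + Suc i) (Suc i)" by (simp add: ORR_def p_def)
    then have "DD ?mu (Suc i) (Suc (a + Suc i)) = DD ?mu i (a + Suc i)"
      using DD_active AA_Suc by metis
    then show ?case using Suc by simp
  qed
  have "real (t + 1) \<le> DD ?mu (n - 1) (a + (n - 1) + 1)" using chain[of "n - 1"] assms by simp
  also have "\<dots> \<le> DD ?mu (n - 1) (Suc (t + n + phi))"
    using a assms by (intro DD_mono) (simp add: p_def)
  finally have ex: "real (t + 1) \<le> dep0 n ?mu (t + n + phi)" by (simp add: dep0_def)
  then have "(LEAST t'. real (t + 1) \<le> dep0 n ?mu t') \<le> t + n + phi" by (rule Least_le)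
  then show "sd0 n ?mu t \<le> ereal (real (n + phi))" using ex
    by (auto simp: sd0_def)
qed



lemma deadline_M0:
  fixes mu :: schedule
  assumes adm: "cyclic_admissible n phi K mu" and n: "1 \<le> n"
    and act: "\<forall>j<n. \<exists>r. mu r j"
    and w: "\<forall>j<n. w j = w 0" "0 < w 0"
  shows "deadline n mu w = M0 n mu"
proof -
  have per: "\<forall>t. mu (t + K) = mu t" using adm_per[OF adm] .
  have K: "0 < K" using adm by (simp add: cyclic_admissible_def)
  have win: "\<forall>j<n. \<forall>b. \<exists>s. b \<le> s \<and> s < b + K \<and> mu s j"
  proof (intro allI impI)
    fix j b assume "j < n"
    then obtain r where "mu r j" using act by blast
    then show "\<exists>s. b \<le> s \<and> s < b + K \<and> mu s j" by (rule window[OF per K])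
  qed
  have qB: "\<forall>s j. j < n \<longrightarrow> q0 mu s j \<le> real K ^ n"
  proof (intro allI impI)
    fix s j assume j: "j < n"
    have "q0 mu s j \<le> real K ^ Suc j" by (rule q0_bound[OF win j])
    also have "\<dots> \<le> real K ^ n" using K j by (intro power_increasing) auto
    finally show "q0 mu s j \<le> real K ^ n" .
  qed
  show ?thesis by (rule deadline_eq[OF w qB]) (use K n in auto)
qed

lemma srv_zero: "queues mu w lam s i = 0 \<Longrightarrow> 0 < w i \<Longrightarrow> srv mu w (queues mu w lam s) s i = 0"
  by (simp add: srv_def)

lemma max_delay_inf:
  fixes mu :: schedule
  assumes w: "\<forall>j<n. w j = w 0" "0 < w 0" and j: "j < n" "\<forall>s. \<not> mu s j" and lam: "0 < lam"
  shows "max_delay n mu w lam = \<infinity>"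
proof -
  have wpos: "0 < w i" if "i < n" for i
  proof -
    have "w i = w 0" using w(1) that by blast
    then show ?thesis using w(2) by simp
  qed
  have Z: "\<forall>i. j < i \<and> i < n \<longrightarrow> queues mu w lam s i = 0" for s
  proof (induction s)
    case 0 then show ?case by simp
  next
    case (Suc s)
    show ?case
    proof (intro allI impI)
      fix i assume i: "j < i \<and> i < n"
      have a: "srv mu w (queues mu w lam s) s i = 0" using Suc i wpos by (intro srv_zero) auto
      have b: "srv mu w (queues mu w lam s) s (i - 1) = 0"
      proof (cases "i - 1 = j")
        case True then show ?thesis using j(2) by (simp add: srv_def)
      next
        case False
        then have "j < i - 1" "i - 1 < n" using i by auto
        then show ?thesis using Suc wpos by (intro srv_zero) auto
      qed
      show "queues mu w lam (Suc s) i = 0" using a b i Suc by simp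
    qed
  qed
  have S: "srv mu w (queues mu w lam s) s (n - 1) = 0" for s
  proof (cases "n - 1 = j")
    case True then show ?thesis using j(2) by (simp add: srv_def)
  next
    case False
    then have "j < n - 1" "n - 1 < n" using j by auto
    then show ?thesis using Z[of s] wpos by (intro srv_zero) auto
  qed
  have dep: "departed n mu w lam t = 0" for t unfolding departed_def S by simp
  have "slot_delay n mu w lam t = \<infinity>" for t
  proof -
    have "0 < lam * real (t + 1)" using lam by simp
    then show ?thesis by (simp add: slot_delay_def dep)
  qed
  then show ?thesis by (simp add: max_delay_def)
qed

lemma deadline_inf:
  fixes mu :: schedule
  assumes w: "\<forall>j<n. w j = w 0" "0 < w 0" and j: "j < n" "\<forall>s. \<not> mu s j"
  shows "deadline n mu w = \<infinity>"
proof -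
  have ev: "eventually (\<lambda>lam. max_delay n mu w lam = \<infinity>) (at_right (0::real))"
    unfolding eventually_at_right_field
    by (intro exI[of _ 1] conjI allI impI max_delay_inf[of n w j mu, OF w j]) auto
  have "((\<lambda>lam. max_delay n mu w lam) \<longlongrightarrow> \<infinity>) (at_right (0::real))"
    by (rule tendsto_eventually[OF ev])
  then show ?thesis unfolding deadline_def
    by (intro tendsto_Lim) (simp_all add: trivial_limit_at_right_real)
qed

lemma act_rate_ORR: "act_rate (phi + 1) (ORR phi) e = 1 / real (phi + 1)"
proof -
  have "(\<Sum>t<phi + 1. if ORR phi t e then 1 else 0) = (\<Sum>t<phi + 1. if t = e mod (phi + 1) then 1 else (0::real))"
    by (intro sum.cong refl) (auto simp: ORR_def)
  also have "\<dots> = 1"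
  proof -
    have "e mod (phi + 1) \<in> {..<phi + 1}" by simp
    moreover have "(\<Sum>t<phi+1. if t = e mod (phi+1) then 1 else (0::real))
       = (if e mod (phi+1) \<in> {..<phi+1} then 1 else 0)" by (rule sum.delta) simp
    ultimately show ?thesis by (simp only: if_True)
  qed
  finally show ?thesis by (simp add: act_rate_def)
qed

lemma throughput_ORR:
  assumes n: "1 \<le> n" and w: "\<forall>j<n. w j = w 0"
  shows "throughput n w (phi + 1) (ORR phi) = w 0 / real (phi + 1)"
proof -
  have "(\<lambda>e. act_rate (phi + 1) (ORR phi) e * w e) ` {..<n} = {w 0 / real (phi + 1)}"
  proof
    show "(\<lambda>e. act_rate (phi + 1) (ORR phi) e * w e) ` {..<n} \<subseteq> {w 0 / real (phi + 1)}"
    proof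
      fix x assume "x \<in> (\<lambda>e. act_rate (phi + 1) (ORR phi) e * w e) ` {..<n}"
      then obtain e where e: "e < n" "x = act_rate (phi + 1) (ORR phi) e * w e" by blast
      have "w e = w 0" using w e(1) by blast
      then show "x \<in> {w 0 / real (phi + 1)}" using e(2) act_rate_ORR[of phi e] by simp
    qed
    show "{w 0 / real (phi + 1)} \<subseteq> (\<lambda>e. act_rate (phi + 1) (ORR phi) e * w e) ` {..<n}"
    proof -
      have "act_rate (phi + 1) (ORR phi) 0 * w 0 = w 0 / real (phi + 1)"
        using act_rate_ORR[of phi 0] by simp
      then show ?thesis using n by (auto simp: image_iff intro!: bexI[of _ 0])
    qed
  qed
  then show ?thesis by (simp add: throughput_def)
qed

lemma throughput_upper:
  fixes mu :: schedule
  assumes adm: "cyclic_admissible n phi K mu" and np: "phi \<le> n - 1" "1 \<le> n"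
    and w: "\<forall>j<n. w j = w 0" and w0: "0 < w 0"
  shows "throughput n w K mu \<le> w 0 / real (phi + 1)"
proof -
  have K: "0 < K" using adm by (simp add: cyclic_admissible_def)
  define f where "f e = act_rate K mu e * w e" for e
  define m where "m = throughput n w K mu"
  have m: "m = Min (f ` {..<n})" by (simp add: m_def throughput_def f_def)
  have le: "m \<le> f e" if "e \<le> phi" for e
  proof -
    have "e < n" using that np by linarith
    then have "f e \<in> f ` {..<n}" by blast
    then show ?thesis unfolding m by (rule Min_le[OF finite_imageI[OF finite_lessThan]])
  qed
  have one: "(\<Sum>e\<le>phi. if mu t e then 1 else 0) \<le> (1::real)" for t
  proof (cases "\<exists>e\<le>phi. mu t e")
    case True
    then obtain e0 where e0: "e0 \<le> phi" "mu t e0" by blast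
    have "(\<Sum>e\<le>phi. if mu t e then 1 else 0) = (\<Sum>e\<le>phi. if e = e0 then 1 else (0::real))"
    proof (intro sum.cong refl)
      fix e assume "e \<in> {..phi}"
      then have he: "e \<le> phi" by simp
      show "(if mu t e then 1 else 0) = (if e = e0 then 1 else (0::real))"
      proof (cases "mu t e")
        case True
        then have "e = e0" by (rule adm_conflict[OF adm he e0(1) np(1) np(2) _ e0(2)])
        then show ?thesis using True by simp
      next
        case False
        then have "e \<noteq> e0" using e0(2) by blast
        then show ?thesis using False by simp
      qed
    qed
    also have "\<dots> = (if e0 \<in> {..phi} then 1 else 0)" by (rule sum.delta) simp
    also have "\<dots> = 1" using e0 by simp
    finally show ?thesis by simp
  next
    case False then show ?thesis by simp
  qed
  have "(\<Sum>e\<le>phi. act_rate K mu e) = (\<Sum>e\<le>phi. \<Sum>t<K. if mu t e then 1 else (0::real)) / real K"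
    by (simp add: act_rate_def sum_divide_distrib)
  also have "\<dots> = (\<Sum>t<K. \<Sum>e\<le>phi. if mu t e then 1 else (0::real)) / real K"
    by (rule arg_cong[where f="\<lambda>x. x / real K"], rule sum.swap)
  also have "\<dots> \<le> (\<Sum>t<K. (1::real)) / real K"
    by (rule divide_right_mono[OF sum_mono[OF one]]) simp
  also have "\<dots> = 1" using K by simp
  finally have ar: "(\<Sum>e\<le>phi. act_rate K mu e) \<le> 1" .
  have "real (phi + 1) * m = (\<Sum>e\<le>phi. m)" by simp
  also have "\<dots> \<le> (\<Sum>e\<le>phi. f e)" by (intro sum_mono le) auto
  also have "\<dots> = (\<Sum>e\<le>phi. act_rate K mu e * w 0)"
  proof (intro sum.cong refl)
    fix e assume "e \<in> {..phi}"
    then have "e < n" using np by auto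
    then have "w e = w 0" using w by blast
    then show "f e = act_rate K mu e * w 0" by (simp add: f_def)
  qed
  also have "\<dots> = (\<Sum>e\<le>phi. act_rate K mu e) * w 0" by (simp add: sum_distrib_right)
  finally have "real (phi + 1) * m \<le> (\<Sum>e\<le>phi. act_rate K mu e) * w 0" .
  also have "\<dots> \<le> 1 * w 0" using ar w0 by (intro mult_right_mono) auto
  finally have "real (phi + 1) * m \<le> w 0" by simp
  then have "m \<le> w 0 / real (phi + 1)" by (simp add: field_simps)
  then show ?thesis by (simp add: m_def)
qed

theorem corollary3:
  fixes n phi :: nat and w :: "nat \<Rightarrow> real"
  assumes "phi \<le> n - 1" and "1 \<le> n"
    and "\<forall>j<n. w j = w 0" and "0 < w 0"
  shows "throughput_optimal n phi w (phi + 1) (ORR phi)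
       \<and> deadline_optimal n phi w (phi + 1) (ORR phi)"
proof -
  note np = assms(1) and n = assms(2) and w = assms(3) and w0 = assms(4)
  have admO: "cyclic_admissible n phi (phi + 1) (ORR phi)" by (rule ORR_adm[OF np])
  have actO: "\<forall>j<n. \<exists>r. ORR phi r j" by (auto simp: ORR_def)
  have dO: "deadline n (ORR phi) w = M0 n (ORR phi)" by (rule deadline_M0[OF admO n actO w w0])
  have TO: "throughput_optimal n phi w (phi + 1) (ORR phi)"
    unfolding throughput_optimal_def
  proof (intro conjI admO allI impI)
    fix K' mu' assume adm: "cyclic_admissible n phi K' mu'"
    have "throughput n w K' mu' \<le> w 0 / real (phi + 1)"
      by (rule throughput_upper[OF adm np n w w0])
    also have "\<dots> = throughput n w (phi + 1) (ORR phi)"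
      by (rule throughput_ORR[OF n w, symmetric])
    finally show "throughput n w K' mu' \<le> throughput n w (phi + 1) (ORR phi)" .
  qed
  have DO: "deadline_optimal n phi w (phi + 1) (ORR phi)"
    unfolding deadline_optimal_def
  proof (intro conjI admO allI impI)
    fix K' mu' assume adm: "cyclic_admissible n phi K' mu'"
    show "deadline n (ORR phi) w \<le> deadline n mu' w"
    proof (cases "\<forall>j<n. \<exists>r. mu' r j")
      case True
      have "deadline n (ORR phi) w \<le> ereal (real (n + phi))"
        using dO M0_ORR[OF n] by simp
      also have "\<dots> \<le> M0 n mu'" by (rule M0_lower[OF adm np n True])
      also have "\<dots> = deadline n mu' w" by (rule deadline_M0[OF adm n True w w0, symmetric])
      finally show ?thesis .
    next
      case False
      then obtain j where "j < n" "\<forall>s. \<not> mu' s j" by blast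
      then have "deadline n mu' w = \<infinity>" by (intro deadline_inf[of n w j mu', OF w w0])
      then show ?thesis by simp
    qed
  qed
  show ?thesis using TO DO by blast
qed


end
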